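(* If $\kappa$ is an uncountable cardinal with $\kappa=\kappa^{<\kappa}$, then every non-empty open subset of ${}^\kappa\kappa$ is equal to the image of ${}^\kappa\kappa$ under an injective continuous function ${}^\kappa\kappa\to{}^\kappa\kappa$.
   Context: ${}^\kappa\kappa$ carries the topology whose basic open sets are $N_s=\{x\in{}^\kappa\kappa : s\subseteq x\}$ for $s$ a function from some ordinal $\alpha<\kappa$ to $\kappa$. *)

theory Defs
  imports "HOL-Analysis.Analysis"
begin

text \<open>The cardinal kappa is represented by a type 'k carrying a cardinal order r
  (a well-order of UNIV that is an initial ordinal); ordinals below kappa are the
  elements of 'k, and alpha = {beta. beta <_r alpha} = underS r alpha.\<close>

definition short_seqs :: "'k rel \<Rightarrow> ('k \<rightharpoonup> 'k) set" where
  "short_seqs r = {s. \<exists>\<alpha>. dom s = underS r \<alpha>}"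

definition basic_nbhd :: "('k \<rightharpoonup> 'k) \<Rightarrow> ('k \<Rightarrow> 'k) set" where
  "basic_nbhd s = {x. \<forall>\<beta>\<in>dom s. s \<beta> = Some (x \<beta>)}"

definition baire_top :: "'k rel \<Rightarrow> ('k \<Rightarrow> 'k) topology" where
  "baire_top r = topology_generated_by (basic_nbhd ` short_seqs r)"

end

theory Submission
  imports Defs
begin
unbundle cardinal_syntax

locale kk = fixes r :: "'k rel"
  assumes co: "card_order r" and inf: "infinite (UNIV::'k set)"
begin

lemma WO: "Well_order r" and FR: "Field r = UNIV"
  using co card_order_on_Card_order card_order_on_well_order_on by blast+

lemma wo: "wo_rel r" using WO wo_rel_def by blast

lemma CO: "Card_order r" using co card_order_on_Card_order by blast

lemma rrefl[simp]: "(a,a) \<in> r"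
  using WO FR unfolding well_order_on_def linear_order_on_def partial_order_on_def
    preorder_on_def refl_on_def by auto

lemma rtotal: "(a,b) \<in> r \<or> (b,a) \<in> r"
  using wo_rel.TOTALS[OF wo] FR by auto

lemma rtrans: "(a,b) \<in> r \<Longrightarrow> (b,c) \<in> r \<Longrightarrow> (a,c) \<in> r"
  using wo_rel.TRANS[OF wo] by (meson transE)

lemma ranti: "(a,b) \<in> r \<Longrightarrow> (b,a) \<in> r \<Longrightarrow> a = b"
  using wo_rel.ANTISYM[OF wo] by (meson antisymD)

lemma no_max: "\<exists>b. (a,b) \<in> r \<and> a \<noteq> b"
proof (rule ccontr)
  assume "\<not> ?thesis"
  hence U: "UNIV = insert a (underS r a)"
    using rtotal by (auto simp: underS_def)
  have l: "|underS r a| <o r" using card_of_underS[OF CO] FR by auto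
  have "|{a}| <o r" using finite_ordLess_infinite[OF card_of_Well_order WO] FR inf Field_card_of by (metis finite.emptyI finite_insert)
  hence "|{a} \<union> underS r a| <o r" using card_of_Un_ordLess_infinite_Field[OF _ CO _ l] FR inf by (metis insert_is_Un)
  hence "|UNIV::'k set| <o r" using U by simp
  moreover have "r =o |UNIV::'k set|" using card_of_Field_ordIso[OF CO] FR ordIso_symmetric by metis
  ultimately show False using ordLess_ordIso_trans ordLess_irreflexive by blast
qed

lemma succ_ex: "\<exists>b. under r a = underS r b"
proof -
  let ?A = "aboveS r a"
  have ne: "?A \<noteq> {}" using no_max[of a] by (auto simp: aboveS_def)
  define b where "b = wo_rel.minim r ?A"
  have b: "b \<in> ?A" using wo_rel.minim_in[OF wo _ ne] b_def FR by auto
  have bl: "\<And>c. c \<in> ?A \<Longrightarrow> (b,c) \<in> r" using wo_rel.minim_least[OF wo _ ] b_def FR by auto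
  have "under r a = underS r b"
  proof safe
    fix c assume "c \<in> under r a" thus "c \<in> underS r b" using b
      by (auto simp: under_def underS_def aboveS_def dest: rtrans ranti)
  next
    fix c assume c: "c \<in> underS r b"
    show "c \<in> under r a"
    proof (rule ccontr)
      assume "c \<notin> under r a"
      hence "c \<in> ?A" using rtotal[of a c] by (auto simp: under_def aboveS_def)
      thus False using bl c ranti by (auto simp: underS_def)
    qed
  qed
  thus ?thesis by blast
qed

lemma card_under: "|under r a| <o r"
  using succ_ex[of a] card_of_underS[OF CO] FR by auto

lemma card_aboveS: "|aboveS r a| =o r"
proof -
  have U: "UNIV = under r a \<union> aboveS r a" using rtotal
    by (auto simp: under_def aboveS_def)
  have "\<not> |aboveS r a| <o r"
  proof
    assume "|aboveS r a| <o r"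
    hence "|UNIV::'k set| <o r" using card_of_Un_ordLess_infinite_Field[OF _ CO card_under]
      FR inf U by metis
    moreover have "r =o |UNIV::'k set|" using card_of_Field_ordIso[OF CO] FR ordIso_symmetric by metis
    ultimately show False using ordLess_ordIso_trans ordLess_irreflexive by blast
  qed
  hence "r \<le>o |aboveS r a|" using not_ordLess_ordLeq WO card_of_Well_order by (metis ordLess_or_ordLeq)
  moreover have "|aboveS r a| \<le>o r"
    using card_of_mono1[of "aboveS r a" UNIV] card_of_Field_ordIso[OF CO] FR ordLeq_ordIso_trans by fastforce
  ultimately show ?thesis using ordIso_iff_ordLeq by blast
qed


lemma iso_above: "\<exists>e. bij_betw e UNIV (aboveS r a) \<and> (\<forall>x y. (x,y) \<in> r \<longleftrightarrow> (e x, e y) \<in> r)"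
proof -
  let ?A = "aboveS r a"
  let ?R = "Restr r ?A"
  have WR: "Well_order ?R" using Well_order_Restr WO by blast
  have FRA: "Field ?R = ?A"
  proof
    show "Field ?R \<subseteq> ?A" by (rule Field_Restr_subset)
    show "?A \<subseteq> Field ?R" proof fix x assume "x \<in> ?A" hence "(x,x) \<in> ?R" by simp thus "x \<in> Field ?R" by (rule FieldI1) qed
  qed
  have "|?A| \<le>o ?R" using card_of_least WR FRA by metis
  hence "r \<le>o ?R" using card_aboveS ordIso_ordLeq_trans ordIso_symmetric by metis
  then obtain e where emb: "embed r ?R e" unfolding ordLeq_def by blast
  have comp: "\<And>x y. (x,y) \<in> r \<Longrightarrow> (e x, e y) \<in> r"
    using embed_compat[OF emb] unfolding compat_def by auto
  have inj: "inj e" using embed_inj_on[OF WO emb] FR by simp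
  have sub: "e ` UNIV \<subseteq> ?A" using embed_Field[OF emb] FR FRA by simp
  have of: "wo_rel.ofilter ?R (e ` UNIV)" using embed_Field_ofilter[OF WO WR emb] FR by simp
  have img: "e ` UNIV = ?A"
  proof (rule ccontr)
    assume ne: "e ` UNIV \<noteq> ?A"
    then obtain b where b: "b \<in> ?A" and eq: "e ` UNIV = underS ?R b"
      using of wo_rel.ofilter_underS_Field[of ?R] WR FRA unfolding wo_rel_def by auto
    have "underS ?R b \<subseteq> underS r b" by (auto simp: underS_def)
    hence "|UNIV::'k set| \<le>o |underS r b|" using card_of_ordLeq inj eq by (metis subset_UNIV)
    moreover have "|underS r b| <o r" using card_of_underS[OF CO] FR by auto
    moreover have "r =o |UNIV::'k set|" using card_of_Field_ordIso[OF CO] FR ordIso_symmetric by metis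
    ultimately show False using ordLeq_ordLess_trans ordLess_ordIso_trans ordLess_irreflexive by metis
  qed
  have "bij_betw e UNIV ?A" using inj img by (simp add: bij_betw_def)
  moreover have "\<forall>x y. (x,y) \<in> r \<longleftrightarrow> (e x, e y) \<in> r"
  proof (intro allI iffI)
    fix x y assume "(x,y) \<in> r" thus "(e x, e y) \<in> r" by (rule comp)
  next
    fix x y assume h: "(e x, e y) \<in> r"
    show "(x,y) \<in> r"
    proof (rule ccontr)
      assume "(x,y) \<notin> r"
      hence "(y,x) \<in> r" "x \<noteq> y" using rtotal by auto
      hence "(e y, e x) \<in> r" "e x \<noteq> e y" using comp inj by (auto dest: injD)
      thus False using h ranti by blast
    qed
  qed
  ultimately show ?thesis by blast
qed

end

definition nb :: "'k rel \<Rightarrow> ('k \<Rightarrow> 'k) \<Rightarrow> 'k \<Rightarrow> ('k \<Rightarrow> 'k) set" where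
  "nb r x a = {y. \<forall>b\<in>underS r a. y b = x b}"

lemma nb_self[simp]: "x \<in> nb r x a" by (simp add: nb_def)

lemma nb_basic: "nb r x a = basic_nbhd (\<lambda>b. if b \<in> underS r a then Some (x b) else None)"
  and nb_short: "(\<lambda>b. if b \<in> underS r a then Some (x b) else None) \<in> short_seqs r"
  by (auto simp: nb_def basic_nbhd_def short_seqs_def dom_def split: if_splits)

lemma nb_in: "nb r x a \<in> basic_nbhd ` short_seqs r"
  unfolding nb_basic by (rule imageI[OF nb_short])

lemma nb_open: "openin (baire_top r) (nb r x a)"
  unfolding baire_top_def by (rule topology_generated_by_Basis[OF nb_in])

lemma top_UNIV[simp]: "topspace (baire_top r) = UNIV"
proof -
  have "x \<in> \<Union> (basic_nbhd ` short_seqs r)" for x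
    by (rule UnionI[OF nb_in[of r x undefined] nb_self])
  thus ?thesis unfolding baire_top_def topology_generated_by_topspace by blast
qed

lemma basic_is_nb: assumes "s \<in> short_seqs r" "x \<in> basic_nbhd s" shows "\<exists>a. basic_nbhd s = nb r x a"
proof -
  obtain a where a: "dom s = underS r a" using assms(1) unfolding short_seqs_def by blast
  have sx: "\<And>b. b \<in> dom s \<Longrightarrow> s b = Some (x b)" using assms(2) unfolding basic_nbhd_def by blast
  have "basic_nbhd s = nb r x a"
    unfolding basic_nbhd_def nb_def using sx a by auto
  thus ?thesis by blast
qed

context kk begin

lemma underS_mono: "(a,b) \<in> r \<Longrightarrow> underS r a \<subseteq> underS r b"
proof
  fix c assume ab: "(a,b) \<in> r" and "c \<in> underS r a"
  hence c: "(c,a) \<in> r" "c \<noteq> a" by (auto simp: underS_def)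
  have "(c,b) \<in> r" using rtrans[OF c(1) ab] .
  moreover have "c \<noteq> b" using c ab ranti by blast
  ultimately show "c \<in> underS r b" by (simp add: underS_def)
qed

lemma nb_mono: "(a,b) \<in> r \<Longrightarrow> nb r x b \<subseteq> nb r x a"
  using underS_mono unfolding nb_def by blast

lemma open_nbhd: assumes "openin (baire_top r) U" shows "\<forall>z\<in>U. \<exists>a. nb r z a \<subseteq> U"
proof -
  have "generate_topology_on (basic_nbhd ` short_seqs r) U"
    using assms unfolding baire_top_def by (rule openin_topology_generated_by)
  thus ?thesis
  proof induction
    case Empty thus ?case by simp
  next
    case (Int S T)
    show ?case
    proof
      fix z assume "z \<in> S \<inter> T"
      then obtain a1 a2 where "nb r z a1 \<subseteq> S" "nb r z a2 \<subseteq> T" using Int by blast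
      moreover have "(a1,a2) \<in> r \<or> (a2,a1) \<in> r" by (rule rtotal)
      ultimately show "\<exists>a. nb r z a \<subseteq> S \<inter> T" using nb_mono[of a1 a2 z] nb_mono[of a2 a1 z] by blast
    qed
  next
    case (UN K) thus ?case by blast
  next
    case (Basis s)
    then obtain t where t: "t \<in> short_seqs r" "s = basic_nbhd t" by blast
    show ?case using basic_is_nb[OF t(1)] t(2) by blast
  qed
qed

lemma cont:
  assumes A: "\<And>x c. \<exists>d. \<forall>y\<in>nb r x d. \<forall>b\<in>underS r c. f y b = f x b"
  shows "continuous_map (baire_top r) (baire_top r) f"
  unfolding continuous_map_def
proof (intro conjI allI impI)
  show "f \<in> topspace (baire_top r) \<rightarrow> topspace (baire_top r)" by simp
  fix V assume V: "openin (baire_top r) V"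
  have H: "\<forall>x\<in>{x \<in> topspace (baire_top r). f x \<in> V}. \<exists>T. openin (baire_top r) T \<and> x \<in> T \<and> T \<subseteq> {x \<in> topspace (baire_top r). f x \<in> V}"
  proof
    fix x assume "x \<in> {x \<in> topspace (baire_top r). f x \<in> V}"
    hence "f x \<in> V" by simp
    then obtain c where c: "nb r (f x) c \<subseteq> V" using open_nbhd[OF V] by blast
    obtain d where d: "\<forall>y\<in>nb r x d. \<forall>b\<in>underS r c. f y b = f x b" using A by blast
    have "nb r x d \<subseteq> {x \<in> topspace (baire_top r). f x \<in> V}"
    proof
      fix y assume "y \<in> nb r x d"
      hence "\<forall>b\<in>underS r c. f y b = f x b" using d by blast
      hence "f y \<in> nb r (f x) c" unfolding nb_def by blast
      thus "y \<in> {x \<in> topspace (baire_top r). f x \<in> V}" using c by auto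
    qed
    thus "\<exists>T. openin (baire_top r) T \<and> x \<in> T \<and> T \<subseteq> {x \<in> topspace (baire_top r). f x \<in> V}"
      using nb_open[of r x d] nb_self[of x r d] by blast
  qed
  show "openin (baire_top r) {x \<in> topspace (baire_top r). f x \<in> V}"
    unfolding openin_subopen[of "baire_top r" "{x \<in> topspace (baire_top r). f x \<in> V}"] by (rule H)
qed

end

context kk begin

definition E :: "'k \<Rightarrow> 'k \<Rightarrow> 'k" where
  "E a = (SOME e. bij_betw e UNIV (aboveS r a) \<and> (\<forall>x y. (x,y) \<in> r \<longleftrightarrow> (e x, e y) \<in> r))"

definition Ei :: "'k \<Rightarrow> 'k \<Rightarrow> 'k" where "Ei a = inv_into UNIV (E a)"

lemma E_bij: "bij_betw (E a) UNIV (aboveS r a)"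
  and E_ord: "(x,y) \<in> r \<longleftrightarrow> (E a x, E a y) \<in> r"
  using someI_ex[OF iso_above[of a]] unfolding E_def by blast+

lemma E_in: "E a x \<in> aboveS r a" using E_bij bij_betwE by blast

lemma E_inj: "E a x = E a y \<Longrightarrow> x = y" using E_bij bij_betw_imp_inj_on injD by metis

lemma Ei_E[simp]: "Ei a (E a x) = x"
  unfolding Ei_def using E_bij bij_betw_imp_inj_on inv_into_f_f by (metis UNIV_I)

lemma E_Ei: "b \<in> aboveS r a \<Longrightarrow> E a (Ei a b) = b"
  unfolding Ei_def using E_bij bij_betw_inv_into_right by metis

lemma Ei_ord: "b \<in> aboveS r a \<Longrightarrow> c \<in> aboveS r a \<Longrightarrow> (b,c) \<in> r \<Longrightarrow> (Ei a b, Ei a c) \<in> r"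
  using E_ord[of "Ei a b" "Ei a c" a] E_Ei by simp

lemma E_strict: "(x,y) \<in> r \<Longrightarrow> x \<noteq> y \<Longrightarrow> E a x \<in> underS r (E a y)"
  using E_ord E_inj unfolding underS_def by blast

definition zero :: 'k where "zero = wo_rel.minim r UNIV"

lemma zero_least: "(zero, a) \<in> r"
  unfolding zero_def using wo_rel.minim_least[OF wo] FR by simp

lemma above_zero: "b \<noteq> zero \<Longrightarrow> b \<in> aboveS r zero"
  using zero_least unfolding aboveS_def by blast

lemma above_not_under: "b \<in> aboveS r a \<Longrightarrow> (b,a) \<notin> r"
  unfolding aboveS_def using ranti by blast

lemma not_under_above: "(b,a) \<notin> r \<Longrightarrow> b \<in> aboveS r a"
  unfolding aboveS_def using rtotal by blast

end

locale kkU = kk r for r :: "'k rel" +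
  fixes U :: "('k \<Rightarrow> 'k) set"
  assumes Uo: "openin (baire_top r) U" and Une: "U \<noteq> {}"
    and cs: "|short_seqs r| =o |UNIV::'k set|"
begin

definition amin where "amin z = wo_rel.minim r {a. nb r z a \<subseteq> U}"

lemma amin: "z \<in> U \<Longrightarrow> nb r z (amin z) \<subseteq> U"
proof -
  assume "z \<in> U"
  hence ne: "{a. nb r z a \<subseteq> U} \<noteq> {}" using open_nbhd[OF Uo] by blast
  show ?thesis using wo_rel.minim_in[OF wo _ ne] FR unfolding amin_def by simp
qed

lemma amin_least: "nb r z a \<subseteq> U \<Longrightarrow> (amin z, a) \<in> r"
  unfolding amin_def using wo_rel.minim_least[OF wo] FR by simp

lemma nb_eq: "(b,a) \<in> r \<Longrightarrow> y \<in> nb r z a \<Longrightarrow> nb r y b = nb r z b"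
  using underS_mono[of b a] unfolding nb_def by auto

lemma agree: assumes z: "z \<in> U" and y: "y \<in> nb r z (amin z)"
  shows "y \<in> U" "amin y = amin z"
proof -
  show "y \<in> U" using amin[OF z] y by blast
  have "nb r y (amin z) = nb r z (amin z)" using nb_eq[OF rrefl y] .
  hence 1: "(amin y, amin z) \<in> r" using amin[OF z] amin_least by metis
  have "nb r y (amin y) = nb r z (amin y)" using nb_eq[OF 1 y] .
  hence "(amin z, amin y) \<in> r" using amin[OF \<open>y \<in> U\<close>] amin_least by metis
  thus "amin y = amin z" using 1 ranti by blast
qed

definition key where "key z = (\<lambda>b. if (b, amin z) \<in> r then Some (z b) else None)"

lemma dom_key: "dom (key z) = under r (amin z)"
  unfolding key_def dom_def under_def by auto

lemma key_short: "key z \<in> short_seqs r"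
  using succ_ex[of "amin z"] dom_key unfolding short_seqs_def by auto

lemma under_inj: "under r a = under r b \<Longrightarrow> a = b"
  unfolding under_def using rrefl ranti by blast

lemma key_eq: assumes "key y = key z"
  shows "amin y = amin z" "\<And>b. (b, amin z) \<in> r \<Longrightarrow> y b = z b"
proof -
  show am: "amin y = amin z" using dom_key[of y] dom_key[of z] assms under_inj by metis
  fix b assume "(b, amin z) \<in> r"
  thus "y b = z b" using fun_cong[OF assms, of b] am unfolding key_def by simp
qed

definition K where "K = key ` U"

lemma card_K: "|K| =o |UNIV::'k set|"
proof -
  have "|K| \<le>o |short_seqs r|" unfolding K_def using key_short card_of_mono1 by (metis image_subsetI)
  hence 1: "|K| \<le>o |UNIV::'k set|" using cs ordLeq_ordIso_trans by blast
  obtain z0 where z0: "z0 \<in> U" using Une by blast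
  define a0 where "a0 = amin z0"
  define g where "g v = key (z0(a0 := v))" for v
  have m: "z0(a0 := v) \<in> nb r z0 a0" for v unfolding nb_def underS_def by simp
  have am: "amin (z0(a0 := v)) = a0" for v using agree(2)[OF z0] m a0_def by metis
  have gv: "g v a0 = Some v" for v unfolding g_def key_def am by simp
  have "inj g" by (rule injI) (metis gv option.inject)
  moreover have "g ` UNIV \<subseteq> K" unfolding K_def g_def using agree(1)[OF z0] m a0_def by blast
  ultimately have "|UNIV::'k set| \<le>o |K|" using card_of_ordLeq by blast
  thus ?thesis using 1 ordIso_iff_ordLeq by blast
qed

definition bb :: "'k \<Rightarrow> ('k \<rightharpoonup> 'k)" where "bb = (SOME b. bij_betw b UNIV K)"

lemma bb: "bij_betw bb UNIV K"
proof -
  have "|UNIV::'k set| =o |K|" using card_K by (rule ordIso_symmetric)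
  hence "\<exists>b. bij_betw b (UNIV::'k set) K" by (simp only: card_of_ordIso[symmetric])
  thus ?thesis unfolding bb_def by (rule someI_ex)
qed

definition zz where "zz v = (SOME z. z \<in> U \<and> key z = bb v)"

lemma zz: "zz v \<in> U \<and> key (zz v) = bb v"
proof -
  have "bb v \<in> K" using bij_betwE[OF bb] by simp
  then obtain z where "z \<in> U" "bb v = key z" unfolding K_def by (rule imageE)
  hence "\<exists>z. z \<in> U \<and> key z = bb v" by metis
  thus ?thesis unfolding zz_def by (rule someI_ex)
qed

definition av where "av v = amin (zz v)"

definition F :: "('k \<Rightarrow> 'k) \<Rightarrow> ('k \<Rightarrow> 'k)" where
  "F x = (\<lambda>b. if (b, av (x zero)) \<in> r then zz (x zero) b else x (E zero (Ei (av (x zero)) b)))"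

lemma F_in: "F x \<in> U \<and> key (F x) = bb (x zero)"
proof -
  let ?v = "x zero"
  have zU: "zz ?v \<in> U" using zz by blast
  have ag: "\<And>b. (b, amin (zz ?v)) \<in> r \<Longrightarrow> F x b = zz ?v b"
    unfolding F_def av_def by simp
  have "F x \<in> nb r (zz ?v) (amin (zz ?v))"
    unfolding nb_def underS_def using ag by blast
  hence 1: "F x \<in> U" "amin (F x) = amin (zz ?v)" using agree[OF zU] by blast+
  have "key (F x) = key (zz ?v)"
  proof
    fix b show "key (F x) b = key (zz ?v) b"
      unfolding key_def 1(2) using ag by simp
  qed
  thus ?thesis using 1 zz by simp
qed

lemma F_inj: "inj F"
proof (rule injI)
  fix x y assume eq: "F x = F y"
  hence "bb (x zero) = bb (y zero)" using F_in by metis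
  hence z: "x zero = y zero" using bb bij_betw_imp_inj_on injD by metis
  let ?a = "av (x zero)"
  have t: "x (E zero g) = y (E zero g)" for g
  proof -
    have "(E ?a g, ?a) \<notin> r" using above_not_under E_in by blast
    thus ?thesis using fun_cong[OF eq, of "E ?a g"] z unfolding F_def by simp
  qed
  show "x = y"
  proof
    fix p show "x p = y p"
    proof (cases "p = zero")
      case True thus ?thesis using z by simp
    next
      case False
      hence "p = E zero (Ei zero p)" using E_Ei above_zero by metis
      thus ?thesis using t by metis
    qed
  qed
qed

lemma F_surj: "z \<in> U \<Longrightarrow> z \<in> range F"
proof -
  assume zU: "z \<in> U"
  have "key z \<in> K" unfolding K_def using zU by blast
  then obtain v where v: "bb v = key z" using bb bij_betw_def by (metis imageE)
  have kz: "key (zz v) = key z" using zz v by simp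
  define a where "a = amin z"
  have avv: "av v = a" unfolding av_def a_def using key_eq(1)[OF kz] .
  define x where "x p = (if p = zero then v else z (E a (Ei zero p)))" for p
  have x0: "x zero = v" unfolding x_def by simp
  have "F x = z"
  proof
    fix b show "F x b = z b"
    proof (cases "(b, a) \<in> r")
      case True thus ?thesis unfolding F_def x0 avv using key_eq(2)[OF kz] a_def by simp
    next
      case False
      hence ba: "b \<in> aboveS r a" by (rule not_under_above)
      have ne: "E zero (Ei a b) \<noteq> zero" using E_in[of zero] unfolding aboveS_def by blast
      have "F x b = x (E zero (Ei a b))" unfolding F_def x0 avv using False by simp
      also have "\<dots> = z (E a (Ei a b))" unfolding x_def using ne by simp
      also have "\<dots> = z b" using E_Ei[OF ba] by simp
      finally show ?thesis .
    qed
  qed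
  thus ?thesis by blast
qed

lemma F_cont: "continuous_map (baire_top r) (baire_top r) F"
proof (rule cont)
  fix x :: "'k \<Rightarrow> 'k" and c :: 'k
  let ?v = "x zero"
  let ?a = "av ?v"
  define d where "d = (if c \<in> aboveS r ?a then E zero (Ei ?a c) else E zero zero)"
  have dz: "zero \<in> underS r d"
  proof -
    have "d \<in> aboveS r zero" unfolding d_def using E_in by simp
    thus ?thesis unfolding aboveS_def underS_def by blast
  qed
  show "\<exists>d. \<forall>y\<in>nb r x d. \<forall>b\<in>underS r c. F y b = F x b"
  proof (intro exI ballI)
    fix y b assume y: "y \<in> nb r x d" and b: "b \<in> underS r c"
    have yz: "y zero = ?v" using y dz unfolding nb_def by blast
    show "F y b = F x b"
    proof (cases "(b, ?a) \<in> r")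
      case True thus ?thesis unfolding F_def yz by simp
    next
      case False
      hence ba: "b \<in> aboveS r ?a" by (rule not_under_above)
      have bc: "(b,c) \<in> r" "b \<noteq> c" using b unfolding underS_def by auto
      have ca: "c \<in> aboveS r ?a"
      proof (rule not_under_above)
        show "(c, ?a) \<notin> r" using False bc rtrans by blast
      qed
      have o: "(Ei ?a b, Ei ?a c) \<in> r" using Ei_ord[OF ba ca bc(1)] .
      have n: "Ei ?a b \<noteq> Ei ?a c" using E_Ei[OF ba] E_Ei[OF ca] bc(2) by metis
      have "E zero (Ei ?a b) \<in> underS r d" unfolding d_def using ca E_strict[OF o n] by simp
      hence "y (E zero (Ei ?a b)) = x (E zero (Ei ?a b))" using y unfolding nb_def by blast
      thus ?thesis unfolding F_def yz using False by simp
    qed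
  qed
qed

end

theorem proposition1p7:
  fixes r :: "'k rel" and U :: "('k \<Rightarrow> 'k) set"
  assumes "card_order r"
    and "\<not> countable (UNIV :: 'k set)"
    and "(card_of (short_seqs r), card_of (UNIV :: 'k set)) \<in> ordIso"
    and "openin (baire_top r) U" and "U \<noteq> {}"
  shows "\<exists>f :: ('k \<Rightarrow> 'k) \<Rightarrow> ('k \<Rightarrow> 'k).
           continuous_map (baire_top r) (baire_top r) f \<and> inj f \<and> f ` UNIV = U"
proof -
  have inf: "infinite (UNIV :: 'k set)" using assms(2) countable_finite by blast
  interpret kkU r U
    using assms inf by unfold_locales auto
  have "F ` UNIV = U" using F_in F_surj by blast
  thus ?thesis using F_cont F_inj by blast
qed

end
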